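(* Let $G$ be a connected topological group and $\Gamma$ a dense subgroup of $G$. Let $H_1,\dots,H_n$ be subgroups of $\Gamma$ none of which is dense in $G$, and let $X=\bigcup_{i=1}^n a_iH_i$ with $a_i\in\Gamma$ be a finite union of cosets of the $H_i$. Then $\Gamma\setminus X$ is dense in $G$. *)

theory Defs
  imports "HOL-Analysis.Analysis" "HOL-Algebra.Coset"
begin

definition topological_group :: "('a, 'b) monoid_scheme \<Rightarrow> 'a topology \<Rightarrow> bool" where
  "topological_group G T \<longleftrightarrow> group G \<and> topspace T = carrier G \<and>
     continuous_map (prod_topology T T) T (\<lambda>(x, y). x \<otimes>\<^bsub>G\<^esub> y) \<and>
     continuous_map T T (\<lambda>x. inv\<^bsub>G\<^esub> x)"

definition dense_in :: "'a topology \<Rightarrow> 'a set \<Rightarrow> bool" where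
  "dense_in T S \<longleftrightarrow> S \<subseteq> topspace T \<and> T closure_of S = topspace T"

end

theory Submission
  imports Defs
begin

lemma tg_lmul_cont:
  assumes tg: "topological_group G T" and g: "g \<in> carrier G"
  shows "continuous_map T T (\<lambda>y. g \<otimes>\<^bsub>G\<^esub> y)"
proof -
  have m: "continuous_map (prod_topology T T) T (\<lambda>(x, y). x \<otimes>\<^bsub>G\<^esub> y)"
    and ts: "topspace T = carrier G" using tg unfolding topological_group_def by auto
  have "continuous_map T (prod_topology T T) (\<lambda>y. (g, y))"
    by (intro continuous_map_pairedI) (auto simp: ts g)
  from continuous_map_compose[OF this m] show ?thesis by (simp add: o_def)
qed

lemma tg_rmul_inv_cont:
  assumes tg: "topological_group G T" and g: "g \<in> carrier G"
  shows "continuous_map T T (\<lambda>y. inv\<^bsub>G\<^esub> y \<otimes>\<^bsub>G\<^esub> g)"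
proof -
  have m: "continuous_map (prod_topology T T) T (\<lambda>(x, y). x \<otimes>\<^bsub>G\<^esub> y)"
    and i: "continuous_map T T (\<lambda>x. inv\<^bsub>G\<^esub> x)"
    and ts: "topspace T = carrier G" using tg unfolding topological_group_def by auto
  have "continuous_map T (prod_topology T T) (\<lambda>y. (inv\<^bsub>G\<^esub> y, g))"
    by (intro continuous_map_pairedI i) (auto simp: ts g)
  from continuous_map_compose[OF this m] show ?thesis by (simp add: o_def)
qed

lemma closure_transl:
  assumes tg: "topological_group G T" and H: "subgroup H G" and h: "h \<in> H"
    and z: "z \<in> T closure_of H"
  shows "h \<otimes>\<^bsub>G\<^esub> z \<in> T closure_of H"
proof -
  have gr: "group G" using tg unfolding topological_group_def by auto
  have hc: "h \<in> carrier G" by (rule subgroup.mem_carrier[OF H h])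
  have "(\<lambda>y. h \<otimes>\<^bsub>G\<^esub> y) ` (T closure_of H) \<subseteq> T closure_of ((\<lambda>y. h \<otimes>\<^bsub>G\<^esub> y) ` H)"
    by (rule continuous_map_image_closure_subset[OF tg_lmul_cont[OF tg hc]])
  also have "\<dots> \<subseteq> T closure_of H"
    by (rule closure_of_mono) (auto intro: subgroup.m_closed[OF H h])
  finally show ?thesis using z by blast
qed

lemma nowhere_dense_subgroup:
  assumes tg: "topological_group G T" and conn: "connected_space T"
    and H: "subgroup H G" and nd: "\<not> dense_in T H"
    and U: "openin T U" and sub: "U \<subseteq> T closure_of H"
  shows "U = {}"
proof (rule ccontr)
  assume ne: "U \<noteq> {}"
  have gr: "group G" and ts: "topspace T = carrier G"
    using tg unfolding topological_group_def by auto
  interpret group G by (rule gr)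
  have Hc: "H \<subseteq> carrier G" by (rule subgroup.subset[OF H])
  obtain u where u: "u \<in> U" using ne by blast
  have "u \<in> T closure_of H" using u sub by blast
  then obtain h0 where h0: "h0 \<in> H" "h0 \<in> U" using U u by (auto simp: in_closure_of)
  have h0c: "h0 \<in> carrier G" using h0 Hc by blast
  define W where "W = {y \<in> topspace T. h0 \<otimes>\<^bsub>G\<^esub> y \<in> U}"
  have Wo: "openin T W" unfolding W_def
    by (rule openin_continuous_map_preimage[OF tg_lmul_cont[OF tg h0c] U])
  have one: "\<one>\<^bsub>G\<^esub> \<in> W" using h0 h0c by (auto simp: W_def ts)
  have Wsub: "W \<subseteq> T closure_of H"
  proof
    fix y assume y: "y \<in> W"
    then have yc: "y \<in> carrier G" by (auto simp: W_def ts)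
    have "h0 \<otimes>\<^bsub>G\<^esub> y \<in> T closure_of H" using y sub by (auto simp: W_def)
    then have "inv\<^bsub>G\<^esub> h0 \<otimes>\<^bsub>G\<^esub> (h0 \<otimes>\<^bsub>G\<^esub> y) \<in> T closure_of H"
      by (rule closure_transl[OF tg H subgroup.m_inv_closed[OF H h0(1)]])
    then show "y \<in> T closure_of H" using h0c yc by (simp add: m_assoc[symmetric])
  qed
  have opn: "openin T (T closure_of H)"
  proof (subst openin_subopen, intro ballI)
    fix x assume x: "x \<in> T closure_of H"
    then have xc: "x \<in> carrier G" using closure_of_subset_topspace[of T H] ts by blast
    define N where "N = {y \<in> topspace T. inv\<^bsub>G\<^esub> y \<otimes>\<^bsub>G\<^esub> x \<in> W}"
    have No: "openin T N" unfolding N_def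
      by (rule openin_continuous_map_preimage[OF tg_rmul_inv_cont[OF tg xc] Wo])
    have "x \<in> N" using xc one by (auto simp: N_def ts)
    then obtain h where h: "h \<in> H" "h \<in> N" using x No by (auto simp: in_closure_of)
    have hc: "h \<in> carrier G" using h Hc by blast
    define w where "w = inv\<^bsub>G\<^esub> h \<otimes>\<^bsub>G\<^esub> x"
    have wW: "w \<in> W" using h by (auto simp: N_def w_def)
    have xe: "x = h \<otimes>\<^bsub>G\<^esub> w" using hc xc by (simp add: w_def m_assoc[symmetric])
    define M where "M = {y \<in> topspace T. inv\<^bsub>G\<^esub> h \<otimes>\<^bsub>G\<^esub> y \<in> W}"
    have Mo: "openin T M" unfolding M_def
      by (rule openin_continuous_map_preimage[OF tg_lmul_cont[OF tg inv_closed[OF hc]] Wo])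
    have "x \<in> M" using xc wW by (auto simp: M_def ts w_def)
    moreover have "M \<subseteq> T closure_of H"
    proof
      fix y assume y: "y \<in> M"
      then have yc: "y \<in> carrier G" by (auto simp: M_def ts)
      have "inv\<^bsub>G\<^esub> h \<otimes>\<^bsub>G\<^esub> y \<in> T closure_of H" using y Wsub by (auto simp: M_def)
      then have "h \<otimes>\<^bsub>G\<^esub> (inv\<^bsub>G\<^esub> h \<otimes>\<^bsub>G\<^esub> y) \<in> T closure_of H"
        using closure_transl[OF tg H h(1)] by blast
      then show "y \<in> T closure_of H" using hc yc by (simp add: m_assoc[symmetric])
    qed
    ultimately show "\<exists>M. openin T M \<and> x \<in> M \<and> M \<subseteq> T closure_of H" using Mo by blast
  qed
  have "\<one>\<^bsub>G\<^esub> \<in> T closure_of H" using one Wsub by blast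
  moreover have "closedin T (T closure_of H)" by simp
  ultimately have "T closure_of H = topspace T"
    using conn opn unfolding connected_space_clopen_in by blast
  then show False using nd Hc ts by (auto simp: dense_in_def)
qed

lemma nowhere_dense_coset:
  assumes tg: "topological_group G T" and conn: "connected_space T"
    and H: "subgroup H G" and nd: "\<not> dense_in T H" and a: "a \<in> carrier G"
    and U: "openin T U" and sub: "U \<subseteq> T closure_of (a <#\<^bsub>G\<^esub> H)"
  shows "U = {}"
proof -
  have gr: "group G" and ts: "topspace T = carrier G"
    using tg unfolding topological_group_def by auto
  interpret group G by (rule gr)
  have Hc: "H \<subseteq> carrier G" by (rule subgroup.subset[OF H])
  define V where "V = {y \<in> topspace T. a \<otimes>\<^bsub>G\<^esub> y \<in> U}"
  have Vo: "openin T V" unfolding V_def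
    by (rule openin_continuous_map_preimage[OF tg_lmul_cont[OF tg a] U])
  have "(\<lambda>y. inv\<^bsub>G\<^esub> a \<otimes>\<^bsub>G\<^esub> y) ` (T closure_of (a <#\<^bsub>G\<^esub> H)) \<subseteq> T closure_of ((\<lambda>y. inv\<^bsub>G\<^esub> a \<otimes>\<^bsub>G\<^esub> y) ` (a <#\<^bsub>G\<^esub> H))"
    by (rule continuous_map_image_closure_subset[OF tg_lmul_cont[OF tg inv_closed[OF a]]])
  also have "(\<lambda>y. inv\<^bsub>G\<^esub> a \<otimes>\<^bsub>G\<^esub> y) ` (a <#\<^bsub>G\<^esub> H) = H"
  proof -
    have "(\<lambda>y. inv\<^bsub>G\<^esub> a \<otimes>\<^bsub>G\<^esub> y) ` (a <#\<^bsub>G\<^esub> H) = (\<lambda>h. inv\<^bsub>G\<^esub> a \<otimes>\<^bsub>G\<^esub> (a \<otimes>\<^bsub>G\<^esub> h)) ` H"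
      by (auto simp: l_coset_def)
    also have "\<dots> = H" using Hc a by (force simp: m_assoc[symmetric])
    finally show ?thesis .
  qed
  finally have cl: "(\<lambda>y. inv\<^bsub>G\<^esub> a \<otimes>\<^bsub>G\<^esub> y) ` (T closure_of (a <#\<^bsub>G\<^esub> H)) \<subseteq> T closure_of H" .
  have "V \<subseteq> T closure_of H"
  proof
    fix y assume y: "y \<in> V"
    then have yc: "y \<in> carrier G" by (auto simp: V_def ts)
    have "inv\<^bsub>G\<^esub> a \<otimes>\<^bsub>G\<^esub> (a \<otimes>\<^bsub>G\<^esub> y) \<in> T closure_of H" using y sub cl by (auto simp: V_def)
    then show "y \<in> T closure_of H" using a yc by (simp add: m_assoc[symmetric])
  qed
  then have "V = {}" using nowhere_dense_subgroup[OF tg conn H nd Vo] by blast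
  then show "U = {}"
  proof -
    { fix u assume u: "u \<in> U"
      then have uc: "u \<in> carrier G" using U openin_subset ts by blast
      have "inv\<^bsub>G\<^esub> a \<otimes>\<^bsub>G\<^esub> u \<in> V" using u uc a by (auto simp: V_def ts m_assoc[symmetric])
    }
    then show ?thesis using \<open>V = {}\<close> by blast
  qed
qed

theorem lemma5p2:
  fixes G :: "('a, 'b) monoid_scheme" and T :: "'a topology"
    and \<Gamma> :: "'a set" and n :: nat and H :: "nat \<Rightarrow> 'a set" and a :: "nat \<Rightarrow> 'a"
  assumes "topological_group G T"
    and "connected_space T"
    and "subgroup \<Gamma> G"
    and "dense_in T \<Gamma>"
    and "\<And>i. i < n \<Longrightarrow> subgroup (H i) G \<and> H i \<subseteq> \<Gamma>"
    and "\<And>i. i < n \<Longrightarrow> \<not> dense_in T (H i)"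
    and "\<And>i. i < n \<Longrightarrow> a i \<in> \<Gamma>"
  shows "dense_in T (\<Gamma> - (\<Union>i<n. a i <#\<^bsub>G\<^esub> H i))"
proof -
  note tg = assms(1)
  have gr: "group G" and ts: "topspace T = carrier G"
    using tg unfolding topological_group_def by auto
  interpret group G by (rule gr)
  have Gc: "\<Gamma> \<subseteq> carrier G" by (rule subgroup.subset[OF assms(3)])
  have ac: "\<And>i. i < n \<Longrightarrow> a i \<in> carrier G" using assms(7) Gc by blast
  have key: "\<And>U. openin T U \<Longrightarrow> U \<noteq> {} \<Longrightarrow> k \<le> n \<Longrightarrow>
      U - (\<Union>i<k. T closure_of (a i <#\<^bsub>G\<^esub> H i)) \<noteq> {}" for k
  proof (induction k)
    case 0 then show ?case by simp
  next
    case (Suc k)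
    let ?U = "U - (\<Union>i<k. T closure_of (a i <#\<^bsub>G\<^esub> H i))"
    have ne: "?U \<noteq> {}" using Suc by simp
    have o: "openin T ?U"
      by (rule openin_diff[OF Suc.prems(1)]) (auto intro: closedin_Union)
    have o2: "openin T (?U - T closure_of (a k <#\<^bsub>G\<^esub> H k))"
      by (rule openin_diff[OF o]) auto
    have eq: "U - (\<Union>i<Suc k. T closure_of (a i <#\<^bsub>G\<^esub> H i)) = ?U - T closure_of (a k <#\<^bsub>G\<^esub> H k)"
      by (auto simp: lessThan_Suc)
    show ?case
    proof
      assume e: "U - (\<Union>i<Suc k. T closure_of (a i <#\<^bsub>G\<^esub> H i)) = {}"
      have "?U \<subseteq> T closure_of (a k <#\<^bsub>G\<^esub> H k)" using e eq by blast
      then have "?U = {}"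
        using nowhere_dense_coset[OF tg assms(2), of "H k" "a k" ?U] assms(5,6) ac Suc.prems(3) o
        by auto
      then show False using ne by blast
    qed
  qed
  have sub: "\<Gamma> - (\<Union>i<n. a i <#\<^bsub>G\<^esub> H i) \<subseteq> topspace T" using Gc ts by blast
  have "topspace T \<subseteq> T closure_of (\<Gamma> - (\<Union>i<n. a i <#\<^bsub>G\<^esub> H i))"
  proof
    fix x assume x: "x \<in> topspace T"
    show "x \<in> T closure_of (\<Gamma> - (\<Union>i<n. a i <#\<^bsub>G\<^esub> H i))"
      unfolding in_closure_of
    proof (intro conjI x allI impI)
      fix U assume U: "x \<in> U \<and> openin T U"
      let ?V = "U - (\<Union>i<n. T closure_of (a i <#\<^bsub>G\<^esub> H i))"
      have Vne: "?V \<noteq> {}" using key[of U n] U by blast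
      have Vo: "openin T ?V"
        by (rule openin_diff) (use U in \<open>auto intro: closedin_Union\<close>)
      obtain v where v: "v \<in> ?V" using Vne by blast
      have "v \<in> topspace T" using v U openin_subset by blast
      then have "v \<in> T closure_of \<Gamma>" using assms(4) by (auto simp: dense_in_def)
      then have "\<exists>y. y \<in> \<Gamma> \<and> y \<in> ?V" using v Vo unfolding in_closure_of by blast
      then obtain y where y: "y \<in> \<Gamma>" "y \<in> ?V" by blast
      have "y \<notin> (\<Union>i<n. a i <#\<^bsub>G\<^esub> H i)"
      proof
        assume "y \<in> (\<Union>i<n. a i <#\<^bsub>G\<^esub> H i)"
        then obtain i where i: "i < n" "y \<in> a i <#\<^bsub>G\<^esub> H i" by blast
        have "a i <#\<^bsub>G\<^esub> H i \<subseteq> topspace T"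
          using l_coset_subset_G[OF subgroup.subset[OF conjunct1[OF assms(5)[OF i(1)]]] ac[OF i(1)]] ts
          by simp
        then have "y \<in> T closure_of (a i <#\<^bsub>G\<^esub> H i)" using i closure_of_subset[of "a i <#\<^bsub>G\<^esub> H i" T] by blast
        then show False using y i by blast
      qed
      then show "\<exists>y. y \<in> \<Gamma> - (\<Union>i<n. a i <#\<^bsub>G\<^esub> H i) \<and> y \<in> U" using y by blast
    qed
  qed
  then show ?thesis using sub closure_of_subset_topspace[of T] unfolding dense_in_def by blast
qed

end
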